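(* For every $K^{\#}$-formula $\phi$ there exists a GNN $\mathcal{A}$ with $[[\mathcal{A}]]=[[\phi]]$ whose number of layers is $O(\mathrm{md}(\phi))$, where $\mathrm{md}(\phi)$ is the modal depth of $\phi$.
   Context: Graphs: a (labeled directed) graph is $G=(V,E,\ell)$ with $V$ finite, $E\subseteq V\times V$, and $\ell$ mapping each vertex to a truth valuation of atomic propositions; a pointed graph is $(G,u)$ with $u\in V$. GNNs: a GNN over input propositions $p_1,\dots,p_k$ is given by $L$ layers, layer $t$ specified by integer matrices $C_t,A_t\in\mathbb{Z}^{d_{t-1}\times d_t}$ and integer vector $b_t\in\mathbb{Z}^{d_t}$ ($d_0=k$), and a classifier $\mathit{cls}(x)=1$ iff $\sum_i a_ix_i\ge1$ with integer $a_i$. States: $x_0(u)=(\ell(u)(p_1),\dots,\ell(u)(p_k))$, $x_t(u)=\boldsymbol\sigma(x_{t-1}(u)C_t+(\sum_{v:(u,v)\in E}x_{t-1}(v))A_t+b_t)$ with $\sigma(z)=\max(0,\min(1,z))$ componentwise. $[[\mathcal{A}]]$ is the set of pointed graphs $(G,u)$ with $\mathit{cls}(x_L(u))=1$. Logic $K^{\#}$: formulas $\phi ::= p \mid \neg\phi \mid \phi\lor\phi \mid \xi\ge 0$, expressions $\xi ::= c \mid 1_\phi \mid \#\phi \mid \xi+\xi \mid c\times\xi$ ($c\in\mathbb{Z}$), with $[[1_\phi]]_{G,u}\in\{0,1\}$ the truth value of $\phi$ at $u$ and $[[\#\phi]]_{G,u}$ the number of successors of $u$ satisfying $\phi$; $(G,u)\models\xi\ge0$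 iff $[[\xi]]_{G,u}\ge0$; $[[\phi]]$ is the set of pointed graphs satisfying $\phi$. Modal depth: $\mathrm{md}(p)=\mathrm{md}(c)=0$, $\mathrm{md}(\neg\phi)=\mathrm{md}(1_\phi)=\mathrm{md}(\phi)$, $\mathrm{md}(\phi\lor\psi)=\max(\mathrm{md}(\phi),\mathrm{md}(\psi))$, $\mathrm{md}(\xi\ge0)=\mathrm{md}(c\times\xi)=\mathrm{md}(\xi)$, $\mathrm{md}(\#\phi)=\mathrm{md}(\phi)+1$, $\mathrm{md}(\xi_1+\xi_2)=\max(\mathrm{md}(\xi_1),\mathrm{md}(\xi_2))$. *)

theory Defs
  imports Main
begin

record 'a graph =
  verts :: "nat set"
  edges :: "(nat \<times> nat) set"
  lab   :: "nat \<Rightarrow> 'a \<Rightarrow> bool"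

definition wf_graph :: "'a graph \<Rightarrow> bool" where
  "wf_graph G \<longleftrightarrow> finite (verts G) \<and> edges G \<subseteq> verts G \<times> verts G"

definition succs :: "'a graph \<Rightarrow> nat \<Rightarrow> nat set" where
  "succs G u = {v. (u, v) \<in> edges G}"

definition pointed_graphs :: "('a graph \<times> nat) set" where
  "pointed_graphs = {(G, u). wf_graph G \<and> u \<in> verts G}"

text \<open>A GNN: input propositions p_1..p_k, dimension list d_0..d_L, layers
  (C_t, A_t, b_t) for t = 1..L (entry (i,j) of C_t is C i j with i<d_{t-1}, j<d_t),
  and classifier weights a_i (i < d_L).\<close>
record 'a gnn =
  inputs :: "'a list"
  dims   :: "nat list"
  layers :: "((nat \<Rightarrow> nat \<Rightarrow> int) \<times> (nat \<Rightarrow> nat \<Rightarrow> int) \<times> (nat \<Rightarrow> int)) list"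
  clsw   :: "nat \<Rightarrow> int"

definition wf_gnn :: "'a gnn \<Rightarrow> bool" where
  "wf_gnn N \<longleftrightarrow> length (dims N) = Suc (length (layers N)) \<and> dims N ! 0 = length (inputs N)"

definition num_layers :: "'a gnn \<Rightarrow> nat" where
  "num_layers N = length (layers N)"

definition sig :: "int \<Rightarrow> int" where
  "sig z = max 0 (min 1 z)"

fun state :: "'a gnn \<Rightarrow> 'a graph \<Rightarrow> nat \<Rightarrow> nat \<Rightarrow> nat \<Rightarrow> int" where
  "state N G 0 u = (\<lambda>i. if i < length (inputs N) then of_bool (lab G u (inputs N ! i)) else 0)"
| "state N G (Suc t) u =
     (let (C, A, b) = layers N ! t in
      (\<lambda>j. if j < dims N ! Suc t then
              sig ((\<Sum>i<dims N ! t. state N G t u i * C i j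
                     + (\<Sum>v\<in>succs G u. state N G t v i) * A i j) + b j)
           else 0))"

definition gnn_accepts :: "'a gnn \<Rightarrow> 'a graph \<Rightarrow> nat \<Rightarrow> bool" where
  "gnn_accepts N G u \<longleftrightarrow>
     (\<Sum>i<dims N ! num_layers N. clsw N i * state N G (num_layers N) u i) \<ge> 1"

definition gnn_sem :: "'a gnn \<Rightarrow> ('a graph \<times> nat) set" where
  "gnn_sem N = {(G, u). (G, u) \<in> pointed_graphs \<and> gnn_accepts N G u}"

datatype 'a fm = Prop 'a | Neg "'a fm" | Or "'a fm" "'a fm" | Ge0 "'a ex"
and 'a ex = Const int | Ind "'a fm" | Count "'a fm" | Plus "'a ex" "'a ex" | Times int "'a ex"

fun sat :: "'a graph \<Rightarrow> nat \<Rightarrow> 'a fm \<Rightarrow> bool"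
and eval :: "'a graph \<Rightarrow> nat \<Rightarrow> 'a ex \<Rightarrow> int" where
  "sat G u (Prop p) = lab G u p"
| "sat G u (Neg \<phi>) = (\<not> sat G u \<phi>)"
| "sat G u (Or \<phi> \<psi>) = (sat G u \<phi> \<or> sat G u \<psi>)"
| "sat G u (Ge0 \<xi>) = (eval G u \<xi> \<ge> 0)"
| "eval G u (Const c) = c"
| "eval G u (Ind \<phi>) = (if sat G u \<phi> then 1 else 0)"
| "eval G u (Count \<phi>) = int (card {v \<in> succs G u. sat G v \<phi>})"
| "eval G u (Plus \<xi>1 \<xi>2) = eval G u \<xi>1 + eval G u \<xi>2"
| "eval G u (Times c \<xi>) = c * eval G u \<xi>"

fun md :: "'a fm \<Rightarrow> nat" and mde :: "'a ex \<Rightarrow> nat" where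
  "md (Prop p) = 0"
| "md (Neg \<phi>) = md \<phi>"
| "md (Or \<phi> \<psi>) = max (md \<phi>) (md \<psi>)"
| "md (Ge0 \<xi>) = mde \<xi>"
| "mde (Const c) = 0"
| "mde (Ind \<phi>) = md \<phi>"
| "mde (Count \<phi>) = Suc (md \<phi>)"
| "mde (Plus \<xi>1 \<xi>2) = max (mde \<xi>1) (mde \<xi>2)"
| "mde (Times c \<xi>) = mde \<xi>"

definition fm_sem :: "'a fm \<Rightarrow> ('a graph \<times> nat) set" where
  "fm_sem \<phi> = {(G, u). (G, u) \<in> pointed_graphs \<and> sat G u \<phi>}"

end

theory Submission
  imports Defs
begin

definition sat_fn :: "'a fm \<Rightarrow> 'a graph \<Rightarrow> nat \<Rightarrow> bool" where
  "sat_fn \<phi> = (\<lambda>G u. sat G u \<phi>)"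

definition gcomp :: "nat \<Rightarrow> ('a graph \<Rightarrow> nat \<Rightarrow> bool) set \<Rightarrow> bool" where
  "gcomp L S \<longleftrightarrow> (\<exists>(N::'a gnn) fs. wf_gnn N \<and> num_layers N = L \<and> distinct fs \<and> S \<subseteq> set fs
     \<and> dims N ! L = length fs
     \<and> (\<forall>G u i. wf_graph G \<longrightarrow> i < length fs \<longrightarrow> state N G L u i = of_bool ((fs ! i) G u)))"

definition thr_ok :: "('a graph \<Rightarrow> nat \<Rightarrow> bool) set \<Rightarrow> ('a graph \<Rightarrow> nat \<Rightarrow> bool) \<Rightarrow> int \<times> (('a graph \<Rightarrow> nat \<Rightarrow> bool) \<Rightarrow> int) \<times> (('a graph \<Rightarrow> nat \<Rightarrow> bool) \<Rightarrow> int) \<Rightarrow> bool" where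
  "thr_ok S g cab \<longleftrightarrow> (\<forall>G u. wf_graph G \<longrightarrow>
     (g G u \<longleftrightarrow> 0 \<le> fst cab + (\<Sum>f\<in>S. fst (snd cab) f * of_bool (f G u) + snd (snd cab) f * int (card {v\<in>succs G u. f G v}))))"

definition thr :: "('a graph \<Rightarrow> nat \<Rightarrow> bool) set \<Rightarrow> ('a graph \<Rightarrow> nat \<Rightarrow> bool) \<Rightarrow> bool" where
  "thr S g \<longleftrightarrow> (\<exists>cab. thr_ok S g cab)"

lemma state_prefix:
  assumes "inputs N' = inputs N" "\<forall>t<T. layers N' ! t = layers N ! t" "\<forall>t\<le>T. dims N' ! t = dims N ! t"
  shows "t \<le> T \<Longrightarrow> state N' G t = state N G t"
proof (induction t)
  case 0
  then show ?case using assms by (auto intro!: ext)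
next
  case (Suc t)
  then have IH: "state N' G t = state N G t" by simp
  show ?case
    apply (rule ext)
    using Suc.prems assms
    apply (simp only: state.simps IH)
    done
qed

lemma finite_succs: "wf_graph G \<Longrightarrow> finite (succs G u)"
  unfolding wf_graph_def succs_def
  by (rule finite_subset[of _ "verts G"]) auto

lemma sum_nth_distinct: "distinct xs \<Longrightarrow> (\<Sum>k<length xs. h (xs ! k)) = sum h (set xs)"
proof -
  assume d: "distinct xs"
  have "set xs = (!) xs ` {..<length xs}" by (auto simp: in_set_conv_nth)
  moreover have "inj_on ((!) xs) {..<length xs}" using d by (simp add: inj_on_nth)
  ultimately show ?thesis by (simp add: sum.reindex)
qed

lemma sig_thr: "sig (z + c + 1) = of_bool (0 \<le> c + z)"
  unfolding sig_def by auto

lemma gcomp_step: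
  assumes "gcomp L S" "finite T" "\<forall>g\<in>T. thr S g"
  shows "gcomp (Suc L) T"
proof -
  obtain N fs where N: "wf_gnn N" "num_layers N = L" "distinct fs" "S \<subseteq> set fs" "dims N ! L = length fs"
    and st: "\<And>G u i. wf_graph G \<Longrightarrow> i < length fs \<Longrightarrow> state N G L u i = of_bool ((fs ! i) G u)"
    using assms(1) unfolding gcomp_def by blast
  obtain gs where gs: "set gs = T" "distinct gs" using finite_distinct_list[OF assms(2)] by blast
  obtain cab where cab0: "\<forall>g\<in>T. thr_ok S g (cab g)" using bchoice[OF assms(3)[unfolded thr_def]] by blast
  have cab: "g G u \<longleftrightarrow> 0 \<le> fst (cab g) + (\<Sum>f\<in>S. fst (snd (cab g)) f * of_bool (f G u) + snd (snd (cab g)) f * int (card {v\<in>succs G u. f G v}))"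
    if "g \<in> T" "wf_graph G" for g G u
  proof -
    have "thr_ok S g (cab g)" using cab0 that(1) by blast
    then show ?thesis unfolding thr_ok_def using that(2) by simp
  qed
  define Cm where "Cm = (\<lambda>k j. if fs ! k \<in> S then fst (snd (cab (gs ! j))) (fs ! k) else 0)"
  define Am where "Am = (\<lambda>k j. if fs ! k \<in> S then snd (snd (cab (gs ! j))) (fs ! k) else 0)"
  define bv where "bv = (\<lambda>j. fst (cab (gs ! j)) + 1)"
  define N' where "N' = N\<lparr>dims := dims N @ [length gs], layers := layers N @ [(Cm, Am, bv)]\<rparr>"
  have lenL: "length (layers N) = L" using N(2) unfolding num_layers_def by simp
  have lend: "length (dims N) = Suc L" using N(1) lenL unfolding wf_gnn_def by simp
  have wf': "wf_gnn N'" using N(1) lend lenL unfolding wf_gnn_def N'_def by (simp add: nth_append)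
  have nl': "num_layers N' = Suc L" unfolding num_layers_def N'_def using lenL by simp
  have pre: "state N' G L = state N G L" for G
    by (rule state_prefix) (auto simp: N'_def nth_append lenL lend)
  have dL: "dims N' ! L = length fs" using N(5) lend by (simp add: N'_def nth_append)
  have dSL: "dims N' ! Suc L = length gs" using lend by (simp add: N'_def nth_append)
  have lay: "layers N' ! L = (Cm, Am, bv)" using lenL by (simp add: N'_def nth_append)
  have main: "state N' G (Suc L) u j = of_bool ((gs ! j) G u)" if G: "wf_graph G" and j: "j < length gs" for G u j
  proof -
    let ?g = "gs ! j"
    have gT: "?g \<in> T" using gs j by auto
    have fin: "finite (succs G u)" using finite_succs[OF G] .
    have suc: "(\<Sum>v\<in>succs G u. (of_bool ((fs ! k) G v)::int)) = int (card {v\<in>succs G u. (fs ! k) G v})" for k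
      using fin by (simp add: sum_of_bool_eq Int_def)
    define h where "h = (\<lambda>f. if f \<in> S then fst (snd (cab ?g)) f * of_bool (f G u) + snd (snd (cab ?g)) f * int (card {v\<in>succs G u. f G v}) else 0)"
    have "(\<Sum>k<dims N ! L. state N G L u k * Cm k j + (\<Sum>v\<in>succs G u. state N G L v k) * Am k j)
        = (\<Sum>k<length fs. h (fs ! k))"
      using N(5) by (intro sum.cong) (auto simp: st[OF G] suc Cm_def Am_def h_def mult.commute)
    also have "\<dots> = sum h (set fs)" using sum_nth_distinct[OF N(3)] .
    also have "\<dots> = (\<Sum>f\<in>S. fst (snd (cab ?g)) f * of_bool (f G u) + snd (snd (cab ?g)) f * int (card {v\<in>succs G u. f G v}))"
    proof -
      have "sum h (set fs) = sum (\<lambda>f. fst (snd (cab ?g)) f * of_bool (f G u) + snd (snd (cab ?g)) f * int (card {v\<in>succs G u. f G v})) {f\<in>set fs. f \<in> S}"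
        unfolding h_def by (simp add: sum.inter_filter)
      moreover have "{f\<in>set fs. f \<in> S} = S" using N(4) by auto
      ultimately show ?thesis by simp
    qed
    finally have eq: "(\<Sum>k<dims N ! L. state N G L u k * Cm k j + (\<Sum>v\<in>succs G u. state N G L v k) * Am k j) = 
       (\<Sum>f\<in>S. fst (snd (cab ?g)) f * of_bool (f G u) + snd (snd (cab ?g)) f * int (card {v\<in>succs G u. f G v}))" .
    have "state N' G (Suc L) u j = sig ((\<Sum>k<dims N ! L. state N G L u k * Cm k j + (\<Sum>v\<in>succs G u. state N G L v k) * Am k j) + bv j)"
      using j by (simp add: lay dSL pre dL N(5))
    also have "\<dots> = of_bool (?g G u)"
      unfolding eq bv_def using cab[OF gT G, of u] sig_thr by (simp add: add.assoc)
    finally show ?thesis .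
  qed
  show ?thesis unfolding gcomp_def
    apply (rule exI[of _ N'], rule exI[of _ gs])
    using wf' nl' gs dSL main by auto
qed


definition mt :: "('a graph \<Rightarrow> nat \<Rightarrow> bool) set \<Rightarrow> ('a graph \<Rightarrow> nat \<Rightarrow> bool) set \<Rightarrow> 'a graph \<Rightarrow> nat \<Rightarrow> bool" where
  "mt S A = (\<lambda>G u. \<forall>f\<in>S. f G u = (f \<in> A))"

lemma thr_mt:
  assumes fin: "finite S" and AS: "A \<subseteq> S"
  shows "thr S (mt S A)"
proof -
  have finA: "finite A" using fin AS finite_subset by blast
  define a where "a = (\<lambda>f. if f \<in> A then 1 else (-1::int))"
  have "thr_ok S (mt S A) (- int (card A), a, \<lambda>_. 0)"
    unfolding thr_ok_def
  proof (intro allI impI)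
    fix G :: "'a graph" and u :: nat
    let ?x = "\<lambda>f. (of_bool (f G u) :: int)"
    have s1: "(\<Sum>f\<in>S. a f * ?x f) = (\<Sum>f\<in>S - A. a f * ?x f) + (\<Sum>f\<in>A. a f * ?x f)"
      using sum.subset_diff[OF AS fin] by simp
    have s2: "(\<Sum>f\<in>A. a f * ?x f) = (\<Sum>f\<in>A. ?x f)" unfolding a_def by (rule sum.cong) auto
    have s3: "(\<Sum>f\<in>S - A. a f * ?x f) = - (\<Sum>f\<in>S - A. ?x f)" unfolding a_def
      by (simp add: sum_negf[symmetric])
    have s4: "int (card A) = (\<Sum>f\<in>A. 1)" by simp
    have e: "- int (card A) + (\<Sum>f\<in>S. a f * ?x f + 0 * int (card {v\<in>succs G u. f G v}))
        = - ((\<Sum>f\<in>A. 1 - ?x f) + (\<Sum>f\<in>S - A. ?x f))"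
      using s1 s2 s3 s4 by (simp add: sum_subtractf)
    have n1: "\<forall>f\<in>A. 0 \<le> 1 - ?x f" by simp
    have n2: "\<forall>f\<in>S - A. 0 \<le> ?x f" by simp
    have z1: "(\<Sum>f\<in>A. 1 - ?x f) = 0 \<longleftrightarrow> (\<forall>f\<in>A. f G u)"
    proof -
      have "(\<Sum>f\<in>A. 1 - ?x f) = 0 \<longleftrightarrow> (\<forall>f\<in>A. 1 - ?x f = 0)"
        using sum_nonneg_eq_0_iff[OF finA, of "\<lambda>f. 1 - ?x f"] n1 by blast
      then show ?thesis by simp
    qed
    have z2: "(\<Sum>f\<in>S - A. ?x f) = 0 \<longleftrightarrow> (\<forall>f\<in>S - A. \<not> f G u)"
    proof -
      have "(\<Sum>f\<in>S - A. ?x f) = 0 \<longleftrightarrow> (\<forall>f\<in>S - A. ?x f = 0)"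
        using sum_nonneg_eq_0_iff[of "S - A" ?x] fin n2 by blast
      then show ?thesis by simp
    qed
    have p1: "0 \<le> (\<Sum>f\<in>A. 1 - ?x f)" using n1 by (simp add: sum_nonneg)
    have p2: "0 \<le> (\<Sum>f\<in>S - A. ?x f)" using n2 by (simp add: sum_nonneg)
    have "mt S A G u \<longleftrightarrow> (\<forall>f\<in>A. f G u) \<and> (\<forall>f\<in>S - A. \<not> f G u)"
      unfolding mt_def using AS by auto
    also have "\<dots> \<longleftrightarrow> 0 \<le> - ((\<Sum>f\<in>A. 1 - ?x f) + (\<Sum>f\<in>S - A. ?x f))"
      using z1 z2 p1 p2 by (smt (verit))
    finally show "mt S A G u \<longleftrightarrow> 0 \<le> fst (- int (card A), a, \<lambda>_. 0) +
        (\<Sum>f\<in>S. fst (snd (- int (card A), a, \<lambda>_. 0)) f * of_bool (f G u) +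
          snd (snd (- int (card A), a, \<lambda>_. (0::int))) f * int (card {v\<in>succs G u. f G v}))"
      using e by simp
  qed
  then show ?thesis unfolding thr_def by blast
qed

lemma thr_or:
  assumes fin: "finite S"
    and det: "\<And>G H u w. wf_graph G \<Longrightarrow> wf_graph H \<Longrightarrow> (\<forall>f\<in>S. f G u = f H w) \<Longrightarrow> g G u = g H w"
  shows "thr (mt S ` Pow S) g"
proof -
  let ?M = "mt S ` Pow S"
  have finM: "finite ?M" using fin by simp
  define a where "a = (\<lambda>m. if (\<exists>G u. wf_graph G \<and> m G u \<and> g G u) then 1 else (0::int))"
  have "thr_ok ?M g (-1, a, \<lambda>_. 0)"
    unfolding thr_ok_def
  proof (intro allI impI)
    fix G :: "'a graph" and u :: nat assume G: "wf_graph G"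
    define m0 where "m0 = mt S {f\<in>S. f G u}"
    have m0M: "m0 \<in> ?M" unfolding m0_def by auto
    have m0u: "m0 G u" unfolding m0_def mt_def by auto
    have other: "\<not> m G u" if "m \<in> ?M" "m \<noteq> m0" for m
    proof
      assume mu: "m G u"
      from that obtain A where A: "A \<subseteq> S" "m = mt S A" by auto
      have "A = {f\<in>S. f G u}" using mu A unfolding mt_def by auto
      then show False using that A m0_def by simp
    qed
    have "(\<Sum>m\<in>?M. a m * of_bool (m G u) + 0 * int (card {v\<in>succs G u. m G v}))
        = (\<Sum>m\<in>?M. if m = m0 then a m else 0)"
      using other m0u by (intro sum.cong) auto
    also have "\<dots> = a m0" using finM m0M by (simp add: sum.delta)
    finally have e: "(\<Sum>m\<in>?M. a m * of_bool (m G u) + 0 * int (card {v\<in>succs G u. m G v})) = a m0" .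
    have "a m0 = 1 \<longleftrightarrow> g G u"
    proof
      assume "a m0 = 1"
      then obtain H w where H: "wf_graph H" "m0 H w" "g H w" unfolding a_def by (auto split: if_splits)
      have "\<forall>f\<in>S. f G u = f H w" using H(2) unfolding m0_def mt_def by auto
      then show "g G u" using det[OF G H(1)] H(3) by blast
    next
      assume "g G u" then show "a m0 = 1" using G m0u unfolding a_def by auto
    qed
    moreover have "a m0 = 0 \<or> a m0 = 1" unfolding a_def by auto
    ultimately show "g G u \<longleftrightarrow> 0 \<le> fst (-1::int, a, \<lambda>_. 0::int) +
        (\<Sum>m\<in>?M. fst (snd (-1::int, a, \<lambda>_. 0::int)) m * of_bool (m G u) +
          snd (snd (-1::int, a, \<lambda>_. 0::int)) m * int (card {v\<in>succs G u. m G v}))"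
      using e by auto
  qed
  then show ?thesis unfolding thr_def by blast
qed

lemma gcomp_det:
  assumes "gcomp L S" "finite S" "finite T"
    and det: "\<And>g G H u w. g \<in> T \<Longrightarrow> wf_graph G \<Longrightarrow> wf_graph H \<Longrightarrow> (\<forall>f\<in>S. f G u = f H w) \<Longrightarrow> g G u = g H w"
  shows "gcomp (Suc (Suc L)) T"
proof -
  have t1: "\<forall>g\<in>mt S ` Pow S. thr S g" using thr_mt[OF assms(2)] by blast
  have c1: "gcomp (Suc L) (mt S ` Pow S)"
    by (rule gcomp_step[OF assms(1)]) (simp_all add: assms(2) t1)
  have t2: "\<forall>g\<in>T. thr (mt S ` Pow S) g"
  proof
    fix g assume g: "g \<in> T"
    show "thr (mt S ` Pow S) g"
      by (rule thr_or[OF assms(2)]) (rule det[OF g], assumption+)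
  qed
  show ?thesis by (rule gcomp_step[OF c1 assms(3) t2])
qed

lemma thr_carry:
  assumes "finite S" "f0 \<in> S"
  shows "thr S f0"
proof -
  have "thr_ok S f0 (-1, \<lambda>f. if f = f0 then 1 else 0, \<lambda>_. 0)"
    unfolding thr_ok_def
  proof (intro allI impI)
    fix G :: "'a graph" and u :: nat
    have "(\<Sum>f\<in>S. (if f = f0 then 1 else 0) * of_bool (f G u) + 0 * int (card {v\<in>succs G u. f G v}))
       = (\<Sum>f\<in>S. if f = f0 then (of_bool (f G u)::int) else 0)"
      by (rule sum.cong) auto
    also have "\<dots> = of_bool (f0 G u)" using assms by (simp add: sum.delta)
    finally show "f0 G u \<longleftrightarrow> 0 \<le> fst (-1::int, \<lambda>f. if f = f0 then 1 else 0::int, \<lambda>_. 0::int) +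
        (\<Sum>f\<in>S. fst (snd (-1::int, \<lambda>f. if f = f0 then 1 else 0::int, \<lambda>_. 0::int)) f * of_bool (f G u) +
          snd (snd (-1::int, \<lambda>f. if f = f0 then 1 else 0::int, \<lambda>_. 0::int)) f * int (card {v\<in>succs G u. f G v}))"
      by simp
  qed
  then show ?thesis unfolding thr_def by blast
qed

lemma gcomp_base:
  assumes "finite P"
  shows "gcomp 0 (sat_fn ` Prop ` P)"
proof -
  obtain ps where ps: "set ps = P" "distinct ps" using finite_distinct_list[OF assms] by blast
  define N :: "'a gnn" where "N = \<lparr>inputs = ps, dims = [length ps], layers = [], clsw = (\<lambda>_. 0)\<rparr>"
  define fs where "fs = map (\<lambda>p. sat_fn (Prop p)) ps"
  have inj: "inj (\<lambda>p. sat_fn (Prop p) :: 'a graph \<Rightarrow> nat \<Rightarrow> bool)"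
  proof
    fix p q :: 'a assume "sat_fn (Prop p) = (sat_fn (Prop q) :: 'a graph \<Rightarrow> nat \<Rightarrow> bool)"
    then have "sat_fn (Prop p) \<lparr>verts = {}, edges = {}, lab = (\<lambda>_ x. x = p)\<rparr> 0 =
               sat_fn (Prop q) (\<lparr>verts = {}, edges = {}, lab = (\<lambda>_ x. x = p)\<rparr> :: 'a graph) 0" by simp
    then show "p = q" unfolding sat_fn_def by simp
  qed
  have "distinct fs" unfolding fs_def using ps(2) inj by (simp add: distinct_map inj_on_def inj_def)
  moreover have "sat_fn ` Prop ` P \<subseteq> set fs" unfolding fs_def using ps(1) by auto
  moreover have "wf_gnn N" "num_layers N = 0" "dims N ! 0 = length fs"
    unfolding N_def wf_gnn_def num_layers_def fs_def by simp_all
  moreover have "\<forall>G u i. wf_graph G \<longrightarrow> i < length fs \<longrightarrow> state N G 0 u i = of_bool ((fs ! i) G u)"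
    unfolding N_def fs_def sat_fn_def by simp
  ultimately show ?thesis unfolding gcomp_def by blast
qed


fun props_fm :: "'a fm \<Rightarrow> 'a set" and props_ex :: "'a ex \<Rightarrow> 'a set" where
  "props_fm (Prop p) = {p}"
| "props_fm (Neg \<phi>) = props_fm \<phi>"
| "props_fm (Or \<phi> \<psi>) = props_fm \<phi> \<union> props_fm \<psi>"
| "props_fm (Ge0 \<xi>) = props_ex \<xi>"
| "props_ex (Const c) = {}"
| "props_ex (Ind \<phi>) = props_fm \<phi>"
| "props_ex (Count \<phi>) = {}"
| "props_ex (Plus a b) = props_ex a \<union> props_ex b"
| "props_ex (Times c a) = props_ex a"

fun cnts_fm :: "'a fm \<Rightarrow> 'a fm set" and cnts_ex :: "'a ex \<Rightarrow> 'a fm set" where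
  "cnts_fm (Prop p) = {}"
| "cnts_fm (Neg \<phi>) = cnts_fm \<phi>"
| "cnts_fm (Or \<phi> \<psi>) = cnts_fm \<phi> \<union> cnts_fm \<psi>"
| "cnts_fm (Ge0 \<xi>) = cnts_ex \<xi>"
| "cnts_ex (Const c) = {}"
| "cnts_ex (Ind \<phi>) = cnts_fm \<phi>"
| "cnts_ex (Count \<phi>) = {\<phi>}"
| "cnts_ex (Plus a b) = cnts_ex a \<union> cnts_ex b"
| "cnts_ex (Times c a) = cnts_ex a"

fun cset :: "'a ex \<Rightarrow> 'a fm set" where
  "cset (Const c) = {}"
| "cset (Ind \<phi>) = {}"
| "cset (Count \<phi>) = {\<phi>}"
| "cset (Plus a b) = cset a \<union> cset b"
| "cset (Times c a) = cset a"

fun coef :: "'a ex \<Rightarrow> 'a fm \<Rightarrow> int" where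
  "coef (Const c) = (\<lambda>_. 0)"
| "coef (Ind \<phi>) = (\<lambda>_. 0)"
| "coef (Count \<phi>) = (\<lambda>\<chi>. if \<chi> = \<phi> then 1 else 0)"
| "coef (Plus a b) = (\<lambda>\<chi>. coef a \<chi> + coef b \<chi>)"
| "coef (Times c a) = (\<lambda>\<chi>. c * coef a \<chi>)"

fun rest :: "'a graph \<Rightarrow> nat \<Rightarrow> 'a ex \<Rightarrow> int" where
  "rest G u (Const c) = c"
| "rest G u (Ind \<phi>) = (if sat G u \<phi> then 1 else 0)"
| "rest G u (Count \<phi>) = 0"
| "rest G u (Plus a b) = rest G u a + rest G u b"
| "rest G u (Times c a) = c * rest G u a"

fun bnd :: "'a ex \<Rightarrow> int" where
  "bnd (Const c) = \<bar>c\<bar>"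
| "bnd (Ind \<phi>) = 1"
| "bnd (Count \<phi>) = 0"
| "bnd (Plus a b) = bnd a + bnd b"
| "bnd (Times c a) = \<bar>c\<bar> * bnd a"

definition Nc :: "'a graph \<Rightarrow> nat \<Rightarrow> 'a fm \<Rightarrow> int" where
  "Nc G u \<psi> = int (card {v\<in>succs G u. sat G v \<psi>})"

definition atom :: "'a ex \<Rightarrow> int \<Rightarrow> 'a graph \<Rightarrow> nat \<Rightarrow> bool" where
  "atom \<xi> r = (\<lambda>G u. 0 \<le> r + (\<Sum>\<psi>\<in>cset \<xi>. coef \<xi> \<psi> * Nc G u \<psi>))"

fun atoms_fm :: "'a fm \<Rightarrow> ('a graph \<Rightarrow> nat \<Rightarrow> bool) set"
and atoms_ex :: "'a ex \<Rightarrow> ('a graph \<Rightarrow> nat \<Rightarrow> bool) set" where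
  "atoms_fm (Prop p) = {}"
| "atoms_fm (Neg \<phi>) = atoms_fm \<phi>"
| "atoms_fm (Or \<phi> \<psi>) = atoms_fm \<phi> \<union> atoms_fm \<psi>"
| "atoms_fm (Ge0 \<xi>) = atoms_ex \<xi> \<union> atom \<xi> ` {- bnd \<xi> .. bnd \<xi>}"
| "atoms_ex (Const c) = {}"
| "atoms_ex (Ind \<phi>) = atoms_fm \<phi>"
| "atoms_ex (Count \<phi>) = {}"
| "atoms_ex (Plus a b) = atoms_ex a \<union> atoms_ex b"
| "atoms_ex (Times c a) = atoms_ex a"

lemma finite_cset: "finite (cset \<xi>)"
  by (induction \<xi> rule: cset.induct) auto

lemma cset_cnts: "cset \<xi> \<subseteq> cnts_ex \<xi>"
  by (induction \<xi> rule: cset.induct) auto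

lemma finite_sets:
  fixes \<phi> :: "'a fm" and \<xi> :: "'a ex"
  shows
  "finite (props_fm \<phi>) \<and> finite (cnts_fm \<phi>) \<and> finite (atoms_fm \<phi>)"
  "finite (props_ex \<xi>) \<and> finite (cnts_ex \<xi>) \<and> finite (atoms_ex \<xi>)"
  by (induct \<phi> and \<xi>) auto

lemma cnts_md:
  fixes \<phi> :: "'a fm" and \<xi> :: "'a ex"
  shows
  "\<psi> \<in> cnts_fm \<phi> \<Longrightarrow> Suc (md \<psi>) \<le> md \<phi>"
  "\<psi> \<in> cnts_ex \<xi> \<Longrightarrow> Suc (md \<psi>) \<le> mde \<xi>"
  by (induct \<phi> and \<xi>) auto

lemma coef_out: "\<chi> \<notin> cset \<xi> \<Longrightarrow> coef \<xi> \<chi> = 0"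
  by (induction \<xi> rule: cset.induct) auto

lemma eval_decomp:
  "finite B \<Longrightarrow> cset \<xi> \<subseteq> B \<Longrightarrow> eval G u \<xi> = rest G u \<xi> + (\<Sum>\<psi>\<in>B. coef \<xi> \<psi> * Nc G u \<psi>)"
proof (induction G u \<xi> rule: rest.induct)
  case (3 G u \<phi>)
  then have "(\<Sum>\<psi>\<in>B. coef (Count \<phi>) \<psi> * Nc G u \<psi>) = (\<Sum>\<psi>\<in>B. if \<psi> = \<phi> then Nc G u \<psi> else 0)"
    by (intro sum.cong) auto
  also have "\<dots> = Nc G u \<phi>" using 3 by (simp add: sum.delta)
  finally show ?case by (simp add: Nc_def)
next
  case (4 G u a b)
  then show ?case by (simp add: sum.distrib algebra_simps)
next
  case (5 G u c a)
  then show ?case by (simp add: sum_distrib_left algebra_simps)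
qed auto

lemma rest_bnd: "\<bar>rest G u \<xi>\<bar> \<le> bnd \<xi>"
proof (induction G u \<xi> rule: rest.induct)
  case (5 G u c a)
  then show ?case by (simp add: abs_mult mult_left_mono)
qed auto

lemma atoms_spec:
  fixes \<phi> :: "'a fm" and \<xi>' :: "'a ex"
  shows
  "f \<in> atoms_fm \<phi> \<Longrightarrow> \<exists>\<xi> r. f = atom \<xi> r \<and> cset \<xi> \<subseteq> cnts_fm \<phi>"
  "f \<in> atoms_ex \<xi>' \<Longrightarrow> \<exists>\<xi> r. f = atom \<xi> r \<and> cset \<xi> \<subseteq> cnts_ex \<xi>'"
proof (induct \<phi> and \<xi>')
  case (Ge0 x)
  then show ?case using cset_cnts by fastforce
qed fastforce+

lemma det:
  fixes \<phi> :: "'a fm" and \<xi> :: "'a ex"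
  shows
  "(\<forall>p\<in>props_fm \<phi>. lab G u p = lab H w p) \<Longrightarrow> (\<forall>f\<in>atoms_fm \<phi>. f G u = f H w) \<Longrightarrow> sat G u \<phi> = sat H w \<phi>"
  "(\<forall>p\<in>props_ex \<xi>. lab G u p = lab H w p) \<Longrightarrow> (\<forall>f\<in>atoms_ex \<xi>. f G u = f H w) \<Longrightarrow> rest G u \<xi> = rest H w \<xi>"
proof (induct \<phi> and \<xi>)
  case (Ge0 \<xi>)
  define r where "r = rest G u \<xi>"
  have rH: "rest H w \<xi> = r" using Ge0 r_def by simp
  have "r \<in> {- bnd \<xi> .. bnd \<xi>}" using rest_bnd[of G u \<xi>] unfolding r_def by auto
  then have "atom \<xi> r G u = atom \<xi> r H w" using Ge0.prems(2) by simp
  moreover have "sat G u (Ge0 \<xi>) = atom \<xi> r G u"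
    using eval_decomp[OF finite_cset subset_refl, of G u \<xi>] unfolding atom_def r_def by simp
  moreover have "sat H w (Ge0 \<xi>) = atom \<xi> r H w"
    using eval_decomp[OF finite_cset subset_refl, of H w \<xi>] rH unfolding atom_def by simp
  ultimately show ?case by simp
qed simp_all

lemma sum_fiber:
  assumes "finite A" "finite B" "\<And>x. x \<in> A \<Longrightarrow> \<exists>!y. y \<in> B \<and> R x y"
  shows "(\<Sum>y\<in>B. \<Sum>x\<in>{x\<in>A. R x y}. h x) = (\<Sum>x\<in>A. h x)"
proof -
  have "(\<Sum>y\<in>B. \<Sum>x\<in>{x\<in>A. R x y}. h x) = (\<Sum>x\<in>A. \<Sum>y\<in>{y\<in>B. R x y}. h x)"
    by (rule sum.swap_restrict[OF assms(1,2), symmetric])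
  also have "\<dots> = (\<Sum>x\<in>A. h x)"
  proof (rule sum.cong)
    fix x assume "x \<in> A"
    then obtain y where "{y\<in>B. R x y} = {y}" using assms(3) by blast
    then show "(\<Sum>y\<in>{y\<in>B. R x y}. h x) = h x" by simp
  qed simp
  finally show ?thesis .
qed

lemma thr_atom:
  assumes "finite C" "cset \<xi> \<subseteq> C" "finite X"
  shows "thr (sat_fn ` (C \<union> X)) (atom \<xi> r)"
proof -
  let ?S = "sat_fn ` (C \<union> X)"
  define b where "b = (\<lambda>f. \<Sum>\<psi>\<in>{\<psi>\<in>cset \<xi>. sat_fn \<psi> = f}. coef \<xi> \<psi>)"
  have "thr_ok ?S (atom \<xi> r) (r, \<lambda>_. 0, b)"
    unfolding thr_ok_def
  proof (intro allI impI)
    fix G :: "'a graph" and u :: nat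
    let ?K = "\<lambda>f. int (card {v\<in>succs G u. f G v})"
    have "(\<Sum>f\<in>?S. 0 * of_bool (f G u) + b f * ?K f) = (\<Sum>f\<in>?S. \<Sum>\<psi>\<in>{\<psi>\<in>cset \<xi>. sat_fn \<psi> = f}. coef \<xi> \<psi> * ?K (sat_fn \<psi>))"
      unfolding b_def by (intro sum.cong) (auto simp: sum_distrib_right)
    also have "\<dots> = (\<Sum>\<psi>\<in>cset \<xi>. coef \<xi> \<psi> * ?K (sat_fn \<psi>))"
      by (rule sum_fiber) (use assms finite_cset in auto)
    also have "\<dots> = (\<Sum>\<psi>\<in>cset \<xi>. coef \<xi> \<psi> * Nc G u \<psi>)"
      by (simp add: Nc_def sat_fn_def)
    finally show "atom \<xi> r G u \<longleftrightarrow> 0 \<le> fst (r, \<lambda>_. 0::int, b) +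
        (\<Sum>f\<in>?S. fst (snd (r, \<lambda>_. 0::int, b)) f * of_bool (f G u) + snd (snd (r, \<lambda>_. 0::int, b)) f * ?K f)"
      unfolding atom_def by simp
  qed
  then show ?thesis unfolding thr_def by blast
qed


lemma level_step:
  fixes \<Phi> :: "'a fm set"
  assumes finPhi: "finite \<Phi>"
    and g0: "gcomp L (sat_fn ` ((\<Union>\<phi>\<in>\<Phi>. cnts_fm \<phi>) \<union> Prop ` (\<Union>\<phi>\<in>\<Phi>. props_fm \<phi>)))"
  shows "gcomp (L + 3) (sat_fn ` \<Phi>)"
proof -
  define C where "C = (\<Union>\<phi>\<in>\<Phi>. cnts_fm \<phi>)"
  define X where "X = Prop ` (\<Union>\<phi>\<in>\<Phi>. props_fm \<phi>)"
  define S0 where "S0 = sat_fn ` (C \<union> X)"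
  define T1 where "T1 = (\<Union>\<phi>\<in>\<Phi>. atoms_fm \<phi>) \<union> sat_fn ` X"
  have finC: "finite C" unfolding C_def using finPhi finite_sets by blast
  have finX: "finite X" unfolding X_def using finPhi finite_sets by blast
  have finS0: "finite S0" unfolding S0_def using finC finX by simp
  have finT1: "finite T1" unfolding T1_def using finPhi finite_sets finX by blast
  have thr1: "\<forall>g\<in>T1. thr S0 g"
  proof
    fix g assume "g \<in> T1"
    then consider (a) \<phi> where "\<phi> \<in> \<Phi>" "g \<in> atoms_fm \<phi>" | (b) "g \<in> sat_fn ` X"
      unfolding T1_def by blast
    then show "thr S0 g"
    proof cases
      case a
      then obtain \<xi> r where g: "g = atom \<xi> r" "cset \<xi> \<subseteq> cnts_fm \<phi>" using atoms_spec(1) by blast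
      have "cset \<xi> \<subseteq> C" using g(2) a(1) unfolding C_def by blast
      then show ?thesis unfolding g(1) S0_def by (rule thr_atom[OF finC _ finX])
    next
      case b
      then have "g \<in> S0" unfolding S0_def by blast
      then show ?thesis by (rule thr_carry[OF finS0])
    qed
  qed
  have g1: "gcomp (Suc L) T1"
    by (rule gcomp_step[OF _ finT1 thr1]) (use g0 in \<open>simp add: S0_def C_def X_def\<close>)
  have "gcomp (Suc (Suc (Suc L))) (sat_fn ` \<Phi>)"
  proof (rule gcomp_det[OF g1 finT1])
    show "finite (sat_fn ` \<Phi>)" using finPhi by simp
  next
    fix g G H u w
    assume g: "g \<in> sat_fn ` \<Phi>" and agree: "\<forall>f\<in>T1. f G u = f H w"
    then obtain \<phi> where \<phi>: "\<phi> \<in> \<Phi>" "g = sat_fn \<phi>" by blast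
    have pr: "\<forall>p\<in>props_fm \<phi>. lab G u p = lab H w p"
    proof
      fix p assume "p \<in> props_fm \<phi>"
      then have "sat_fn (Prop p) \<in> T1" unfolding T1_def X_def using \<phi>(1) by blast
      then have "sat_fn (Prop p) G u = sat_fn (Prop p) H w" using agree by blast
      then show "lab G u p = lab H w p" unfolding sat_fn_def by simp
    qed
    have at: "\<forall>f\<in>atoms_fm \<phi>. f G u = f H w" using agree \<phi>(1) unfolding T1_def by blast
    show "g G u = g H w" unfolding \<phi>(2) sat_fn_def using det(1)[OF pr at] .
  qed
  then show ?thesis by (simp add: numeral_3_eq_3)
qed

lemma level:
  fixes \<Phi> :: "'a fm set"
  shows "finite \<Phi> \<Longrightarrow> \<forall>\<phi>\<in>\<Phi>. md \<phi> \<le> m \<Longrightarrow> gcomp (3 * m + 3) (sat_fn ` \<Phi>)"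
proof (induction m arbitrary: \<Phi>)
  case 0
  have "(\<Union>\<phi>\<in>\<Phi>. cnts_fm \<phi>) = {}"
    using 0(2) cnts_md(1) by fastforce
  moreover have "finite (\<Union>\<phi>\<in>\<Phi>. props_fm \<phi>)" using 0(1) finite_sets by blast
  ultimately have "gcomp 0 (sat_fn ` ((\<Union>\<phi>\<in>\<Phi>. cnts_fm \<phi>) \<union> Prop ` (\<Union>\<phi>\<in>\<Phi>. props_fm \<phi>)))"
    using gcomp_base by simp
  then have "gcomp (0 + 3) (sat_fn ` \<Phi>)" by (rule level_step[OF 0(1)])
  then show ?case by simp
next
  case (Suc k)
  let ?Phi' = "(\<Union>\<phi>\<in>\<Phi>. cnts_fm \<phi>) \<union> Prop ` (\<Union>\<phi>\<in>\<Phi>. props_fm \<phi>)"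
  have fin: "finite ?Phi'" using Suc(2) finite_sets by blast
  have md: "\<forall>\<phi>\<in>?Phi'. md \<phi> \<le> k"
  proof
    fix \<psi> assume "\<psi> \<in> ?Phi'"
    then consider (a) \<phi> where "\<phi> \<in> \<Phi>" "\<psi> \<in> cnts_fm \<phi>" | (b) p where "\<psi> = Prop p" by blast
    then show "md \<psi> \<le> k"
    proof cases
      case a
      then show ?thesis using cnts_md(1)[OF a(2)] Suc(3) by fastforce
    qed simp
  qed
  have "gcomp (3 * k + 3) (sat_fn ` ?Phi')" using Suc.IH[OF fin md] .
  then have "gcomp (3 * k + 3 + 3) (sat_fn ` \<Phi>)" by (rule level_step[OF Suc(2)])
  then show ?case by (simp add: algebra_simps)
qed

theorem mainTheorem3:
  "\<exists>c d :: nat. \<forall>\<phi> :: 'a fm. \<exists>N :: 'a gnn.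
      wf_gnn N \<and> gnn_sem N = fm_sem \<phi> \<and> num_layers N \<le> c * md \<phi> + d"
proof (rule exI[of _ 3], rule exI[of _ 3], rule allI)
  fix \<phi> :: "'a fm"
  let ?L = "3 * md \<phi> + 3"
  have "gcomp ?L (sat_fn ` {\<phi>})" by (rule level) auto
  then obtain N :: "'a gnn" and fs where N: "wf_gnn N" "num_layers N = ?L" "distinct fs" "sat_fn \<phi> \<in> set fs"
     "dims N ! ?L = length fs"
    and st: "\<And>G u i. wf_graph G \<Longrightarrow> i < length fs \<Longrightarrow> state N G ?L u i = of_bool ((fs ! i) G u)"
    unfolding gcomp_def by auto
  obtain k where k: "k < length fs" "fs ! k = sat_fn \<phi>" using N(4) by (auto simp: in_set_conv_nth)
  define N' where "N' = N\<lparr>clsw := (\<lambda>i. if i = k then 1 else 0)\<rparr>"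
  have stN: "state N' G ?L = state N G ?L" for G
    by (rule state_prefix[where T = ?L]) (simp_all add: N'_def)
  have wf: "wf_gnn N'" using N(1) unfolding N'_def wf_gnn_def by simp
  have nl: "num_layers N' = ?L" using N(2) unfolding N'_def num_layers_def by simp
  have acc: "gnn_accepts N' G u \<longleftrightarrow> sat G u \<phi>" if G: "wf_graph G" for G u
  proof -
    have "(\<Sum>i<dims N' ! num_layers N'. clsw N' i * state N' G (num_layers N') u i)
        = (\<Sum>i<length fs. if i = k then state N G ?L u i else 0)"
      using N(5) nl stN by (intro sum.cong) (auto simp: N'_def)
    also have "\<dots> = state N G ?L u k" using k(1) by (simp add: sum.delta)
    also have "\<dots> = of_bool (sat G u \<phi>)" using st[OF G k(1)] k(2) by (simp add: sat_fn_def)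
    finally show ?thesis unfolding gnn_accepts_def by simp
  qed
  have "gnn_sem N' = fm_sem \<phi>"
    unfolding gnn_sem_def fm_sem_def pointed_graphs_def using acc by auto
  then show "\<exists>N :: 'a gnn. wf_gnn N \<and> gnn_sem N = fm_sem \<phi> \<and> num_layers N \<le> 3 * md \<phi> + 3"
    using wf nl by (intro exI[of _ N']) simp
qed

end
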